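(* Let $G$ be a multiplicative monoid with identity, let $N$ and $M$ be $G$-graded near-rings and let $P$ be a graded ideal of $N$. Then $P$ is a graded almost prime ideal of $N$ if and only if $P\times M$ is a graded almost prime ideal of $N\times M$.
   Context: A near-ring $(N,+,\cdot)$ is a set with two binary operations such that $(N,+)$ is a group (not necessarily abelian), $(N,\cdot)$ is a semigroup, and $(a+b)y = ay+by$ for all $a,b,y\in N$. For a multiplicative monoid $G$ with identity, $N$ is a $G$-graded near-ring if there is a family $\{N_\sigma\}_{\sigma\in G}$ of additive normal subgroups of $N$ with $N=\bigoplus_{\sigma\in G}N_\sigma$ and $N_\sigma N_\tau\subseteq N_{\sigma\tau}$. $N\times M$ is $G$-graded with components $N_\sigma\times M_\sigma$. An ideal $P$ is graded if $P=\bigoplus_{\sigma}(P\cap N_\sigma)$. For ideals $I,J$, $IJ$ denotes their product and $P^2=PP$; for a graded ideal $P$ of a graded near-ring $R$ the paper writes $P^2\cap R$. A graded ideal $P$ of $R$ is graded almost prime if for all graded ideals $I,J$ of $R$ with $IJ\subseteq P$ and $IJ\not\subseteq P^2\cap R$, either $I\subseteq P$ or $J\subseteq P$. *)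

theory Defs
  imports "HOL-Algebra.Algebra"
begin

text \<open>A near-ring is represented by a HOL-Algebra ring record (the field one is unused).\<close>

definition near_ring :: "('a, 'm) ring_scheme \<Rightarrow> bool" where
  "near_ring R \<longleftrightarrow>
     group (add_monoid R) \<and>
     (\<forall>x\<in>carrier R. \<forall>y\<in>carrier R. x \<otimes>\<^bsub>R\<^esub> y \<in> carrier R) \<and>
     (\<forall>x\<in>carrier R. \<forall>y\<in>carrier R. \<forall>z\<in>carrier R.
        (x \<otimes>\<^bsub>R\<^esub> y) \<otimes>\<^bsub>R\<^esub> z = x \<otimes>\<^bsub>R\<^esub> (y \<otimes>\<^bsub>R\<^esub> z)) \<and>
     (\<forall>a\<in>carrier R. \<forall>b\<in>carrier R. \<forall>y\<in>carrier R.
        (a \<oplus>\<^bsub>R\<^esub> b) \<otimes>\<^bsub>R\<^esub> y = (a \<otimes>\<^bsub>R\<^esub> y) \<oplus>\<^bsub>R\<^esub> (b \<otimes>\<^bsub>R\<^esub> y))"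

text \<open>Ideal of a (right distributive) near-ring (Pilz): a normal subgroup I of (N,+)
  with I N \<subseteq> I and n(n'+i) - n n' \<in> I.\<close>

definition nr_ideal :: "('a, 'm) ring_scheme \<Rightarrow> 'a set \<Rightarrow> bool" where
  "nr_ideal R I \<longleftrightarrow>
     normal I (add_monoid R) \<and>
     (\<forall>i\<in>I. \<forall>n\<in>carrier R. i \<otimes>\<^bsub>R\<^esub> n \<in> I) \<and>
     (\<forall>n\<in>carrier R. \<forall>n'\<in>carrier R. \<forall>i\<in>I.
        (n \<otimes>\<^bsub>R\<^esub> (n' \<oplus>\<^bsub>R\<^esub> i)) \<oplus>\<^bsub>R\<^esub> (inv\<^bsub>add_monoid R\<^esub> (n \<otimes>\<^bsub>R\<^esub> n')) \<in> I)"

text \<open>G-graded near-ring: G a monoid, Ns :: 'g \<Rightarrow> 'a set the homogeneous components,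
  additive normal subgroups forming an internal direct sum, with N_s N_t \<subseteq> N_{st}.\<close>

definition graded_near_ring ::
  "('g, 'n) monoid_scheme \<Rightarrow> ('a, 'm) ring_scheme \<Rightarrow> ('g \<Rightarrow> 'a set) \<Rightarrow> bool" where
  "graded_near_ring G R Ns \<longleftrightarrow>
     monoid G \<and> near_ring R \<and>
     (\<forall>s\<in>carrier G. normal (Ns s) (add_monoid R)) \<and>
     generate (add_monoid R) (\<Union>s\<in>carrier G. Ns s) = carrier R \<and>
     (\<forall>s\<in>carrier G. Ns s \<inter> generate (add_monoid R) (\<Union>t\<in>carrier G - {s}. Ns t)
                      = {\<zero>\<^bsub>R\<^esub>}) \<and>
     (\<forall>s\<in>carrier G. \<forall>t\<in>carrier G. \<forall>x\<in>Ns s. \<forall>y\<in>Ns t.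
        x \<otimes>\<^bsub>R\<^esub> y \<in> Ns (s \<otimes>\<^bsub>G\<^esub> t))"

definition graded_ideal ::
  "('g, 'n) monoid_scheme \<Rightarrow> ('a, 'm) ring_scheme \<Rightarrow> ('g \<Rightarrow> 'a set) \<Rightarrow> 'a set \<Rightarrow> bool" where
  "graded_ideal G R Ns P \<longleftrightarrow>
     nr_ideal R P \<and> generate (add_monoid R) (\<Union>s\<in>carrier G. P \<inter> Ns s) = P"

definition ideal_prod :: "('a, 'm) ring_scheme \<Rightarrow> 'a set \<Rightarrow> 'a set \<Rightarrow> 'a set" where
  "ideal_prod R I J = generate (add_monoid R) {i \<otimes>\<^bsub>R\<^esub> j | i j. i \<in> I \<and> j \<in> J}"

definition graded_almost_prime ::
  "('g, 'n) monoid_scheme \<Rightarrow> ('a, 'm) ring_scheme \<Rightarrow> ('g \<Rightarrow> 'a set) \<Rightarrow> 'a set \<Rightarrow> bool" where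
  "graded_almost_prime G R Ns P \<longleftrightarrow>
     graded_ideal G R Ns P \<and>
     (\<forall>I J. graded_ideal G R Ns I \<longrightarrow> graded_ideal G R Ns J \<longrightarrow>
        ideal_prod R I J \<subseteq> P \<longrightarrow>
        \<not> ideal_prod R I J \<subseteq> ideal_prod R P P \<inter> carrier R \<longrightarrow>
        I \<subseteq> P \<or> J \<subseteq> P)"

definition product_grading :: "('g \<Rightarrow> 'a set) \<Rightarrow> ('g \<Rightarrow> 'b set) \<Rightarrow> 'g \<Rightarrow> ('a \<times> 'b) set" where
  "product_grading Ns Ms s = Ns s \<times> Ms s"

end

theory Submission
  imports Defs
begin


lemma RDP_mult [simp]: "(a, b) \<otimes>\<^bsub>RDirProd N M\<^esub> (c, d) = (a \<otimes>\<^bsub>N\<^esub> c, b \<otimes>\<^bsub>M\<^esub> d)"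
  by (simp add: RDirProd_def monoid.defs DirProd_def)
lemma RDP_carrier [simp]: "carrier (RDirProd N M) = carrier N \<times> carrier M"
  by (rule RDirProd_carrier)

lemma near_ring_group: "near_ring N \<Longrightarrow> group (add_monoid N)"
  by (simp add: near_ring_def)

lemma nmc: "near_ring N \<Longrightarrow> x \<in> carrier N \<Longrightarrow> y \<in> carrier N \<Longrightarrow> x \<otimes>\<^bsub>N\<^esub> y \<in> carrier N"
  unfolding near_ring_def by blast

lemma near_zero_mult:
  assumes "near_ring N" "y \<in> carrier N"
  shows "\<zero>\<^bsub>N\<^esub> \<otimes>\<^bsub>N\<^esub> y = \<zero>\<^bsub>N\<^esub>"
proof -
  interpret A: group "add_monoid N" using assms near_ring_group by blast
  have z: "\<zero>\<^bsub>N\<^esub> \<in> carrier N" using A.one_closed by simp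
  have c: "\<zero>\<^bsub>N\<^esub> \<otimes>\<^bsub>N\<^esub> y \<in> carrier N" using assms z by (simp add: nmc)
  have zz: "\<zero>\<^bsub>N\<^esub> \<oplus>\<^bsub>N\<^esub> \<zero>\<^bsub>N\<^esub> = \<zero>\<^bsub>N\<^esub>" using A.l_one[of "\<zero>\<^bsub>N\<^esub>"] z by simp
  have "\<zero>\<^bsub>N\<^esub> \<otimes>\<^bsub>N\<^esub> y = (\<zero>\<^bsub>N\<^esub> \<otimes>\<^bsub>N\<^esub> y) \<oplus>\<^bsub>N\<^esub> (\<zero>\<^bsub>N\<^esub> \<otimes>\<^bsub>N\<^esub> y)"
    using assms z zz unfolding near_ring_def by metis
  then have "(\<zero>\<^bsub>N\<^esub> \<otimes>\<^bsub>N\<^esub> y) \<otimes>\<^bsub>add_monoid N\<^esub> (\<zero>\<^bsub>N\<^esub> \<otimes>\<^bsub>N\<^esub> y) = (\<zero>\<^bsub>N\<^esub> \<otimes>\<^bsub>N\<^esub> y) \<otimes>\<^bsub>add_monoid N\<^esub> \<one>\<^bsub>add_monoid N\<^esub>"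
    using c A.r_one[of "\<zero>\<^bsub>N\<^esub> \<otimes>\<^bsub>N\<^esub> y"] by simp
  then show ?thesis using A.l_cancel[of "\<zero>\<^bsub>N\<^esub> \<otimes>\<^bsub>N\<^esub> y"] c z by simp
qed

lemma gen_fst:
  assumes "group A" "group B" "S \<subseteq> carrier A \<times> carrier B"
  shows "fst ` generate (A \<times>\<times> B) S = generate A (fst ` S)"
proof -
  interpret group_hom "A \<times>\<times> B" A fst
    using assms by (auto intro!: group_hom.intro group_hom_axioms.intro DirProd_group simp: hom_def mult_DirProd')
  show ?thesis using generate_img[of S] assms by simp
qed

lemma gen_left:
  assumes "group A" "group B" "S \<subseteq> carrier A"
  shows "generate A S \<times> {\<one>\<^bsub>B\<^esub>} = generate (A \<times>\<times> B) (S \<times> {\<one>\<^bsub>B\<^esub>})"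
proof -
  interpret group_hom A "A \<times>\<times> B" "\<lambda>x. (x, \<one>\<^bsub>B\<^esub>)"
    using assms by (auto intro!: group_hom.intro group_hom_axioms.intro DirProd_group simp: hom_def group.is_monoid)
  have "(\<lambda>x. (x, \<one>\<^bsub>B\<^esub>)) ` S = S \<times> {\<one>\<^bsub>B\<^esub>}" by auto
  moreover have "(\<lambda>x. (x, \<one>\<^bsub>B\<^esub>)) ` generate A S = generate A S \<times> {\<one>\<^bsub>B\<^esub>}" by auto
  ultimately show ?thesis using generate_img[of S] assms by simp
qed

lemma gen_right:
  assumes "group A" "group B" "T \<subseteq> carrier B"
  shows "{\<one>\<^bsub>A\<^esub>} \<times> generate B T = generate (A \<times>\<times> B) ({\<one>\<^bsub>A\<^esub>} \<times> T)"
proof -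
  interpret group_hom B "A \<times>\<times> B" "\<lambda>x. (\<one>\<^bsub>A\<^esub>, x)"
    using assms by (auto intro!: group_hom.intro group_hom_axioms.intro DirProd_group simp: hom_def group.is_monoid)
  have "(\<lambda>x. (\<one>\<^bsub>A\<^esub>, x)) ` T = {\<one>\<^bsub>A\<^esub>} \<times> T" by auto
  moreover have "(\<lambda>x. (\<one>\<^bsub>A\<^esub>, x)) ` generate B T = {\<one>\<^bsub>A\<^esub>} \<times> generate B T" by auto
  ultimately show ?thesis using generate_img[of T] assms by simp
qed

lemma gen_prod:
  assumes "group A" "group B" "S \<subseteq> carrier A" "T \<subseteq> carrier B"
  shows "generate A S \<times> generate B T \<subseteq> generate (A \<times>\<times> B) (S \<times> {\<one>\<^bsub>B\<^esub>} \<union> {\<one>\<^bsub>A\<^esub>} \<times> T)"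
proof
  fix x assume x: "x \<in> generate A S \<times> generate B T"
  then obtain a b where ab: "x = (a, b)" "a \<in> generate A S" "b \<in> generate B T" by auto
  interpret P: group "A \<times>\<times> B" using assms DirProd_group by blast
  have a: "a \<in> carrier A" using group.generate_in_carrier[OF assms(1) assms(3) ab(2)] .
  have b: "b \<in> carrier B" using group.generate_in_carrier[OF assms(2) assms(4) ab(3)] .
  have 1: "(a, \<one>\<^bsub>B\<^esub>) \<in> generate (A \<times>\<times> B) (S \<times> {\<one>\<^bsub>B\<^esub>} \<union> {\<one>\<^bsub>A\<^esub>} \<times> T)"
  proof (rule subsetD[OF P.mono_generate[OF Un_upper1]])
    show "(a, \<one>\<^bsub>B\<^esub>) \<in> generate (A \<times>\<times> B) (S \<times> {\<one>\<^bsub>B\<^esub>})"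
      unfolding gen_left[OF assms(1,2,3), symmetric] using ab(2) by blast
  qed
  have 2: "(\<one>\<^bsub>A\<^esub>, b) \<in> generate (A \<times>\<times> B) (S \<times> {\<one>\<^bsub>B\<^esub>} \<union> {\<one>\<^bsub>A\<^esub>} \<times> T)"
  proof (rule subsetD[OF P.mono_generate[OF Un_upper2]])
    show "(\<one>\<^bsub>A\<^esub>, b) \<in> generate (A \<times>\<times> B) ({\<one>\<^bsub>A\<^esub>} \<times> T)"
      unfolding gen_right[OF assms(1,2,4), symmetric] using ab(3) by blast
  qed
  have "(a, \<one>\<^bsub>B\<^esub>) \<otimes>\<^bsub>A \<times>\<times> B\<^esub> (\<one>\<^bsub>A\<^esub>, b) = x"
    using a b ab assms by (simp add: group.is_monoid monoid.l_one monoid.r_one)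
  then show "x \<in> generate (A \<times>\<times> B) (S \<times> {\<one>\<^bsub>B\<^esub>} \<union> {\<one>\<^bsub>A\<^esub>} \<times> T)"
    using generate.eng[OF 1 2] by simp
qed



lemma RDP_add [simp]: "(a, b) \<oplus>\<^bsub>RDirProd N M\<^esub> (c, d) = (a \<oplus>\<^bsub>N\<^esub> c, b \<oplus>\<^bsub>M\<^esub> d)"
  by (simp add: RDirProd_def monoid.defs DirProd_def)

lemma nr_ideal_sub: "nr_ideal N I \<Longrightarrow> I \<subseteq> carrier N"
  unfolding nr_ideal_def using normal_imp_subgroup subgroup.subset by fastforce

lemma nr_ideal_subgroup: "nr_ideal N I \<Longrightarrow> subgroup I (add_monoid N)"
  unfolding nr_ideal_def using normal_imp_subgroup by blast

lemma graded_nr: "graded_near_ring G N Ns \<Longrightarrow> near_ring N"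
  by (simp add: graded_near_ring_def)

lemma normal_sub: "H \<lhd> add_monoid R \<Longrightarrow> H \<subseteq> carrier R"
  using subgroup.subset[OF normal_imp_subgroup] by fastforce

lemma normal_zero: "H \<lhd> add_monoid R \<Longrightarrow> \<zero>\<^bsub>R\<^esub> \<in> H"
  using subgroup.one_closed[OF normal_imp_subgroup] by fastforce

lemma prod_ideal:
  assumes gN: "graded_near_ring G N Ns" and gM: "graded_near_ring G M Ms"
    and I: "graded_ideal G N Ns I"
  shows "graded_ideal G (RDirProd N M) (product_grading Ns Ms) (I \<times> carrier M)"
proof -
  have nN: "near_ring N" and nM: "near_ring M" using gN gM graded_nr by blast+
  interpret AN: group "add_monoid N" by (rule near_ring_group[OF nN])
  interpret AM: group "add_monoid M" by (rule near_ring_group[OF nM])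
  have nI: "nr_ideal N I" using I unfolding graded_ideal_def by blast
  have Isub: "I \<subseteq> carrier N" using nI nr_ideal_sub by blast
  have normI: "I \<lhd> add_monoid N" using nI nr_ideal_def by blast
  have normM: "carrier M \<lhd> add_monoid M" using AM.normal_self by simp
  have c1: "normal (I \<times> carrier M) (add_monoid (RDirProd N M))"
    unfolding RDirProd_add_monoid using AN.DirProd_normal[OF AM.is_group normI normM] .
  have c2: "\<forall>i\<in>I \<times> carrier M. \<forall>n\<in>carrier (RDirProd N M). i \<otimes>\<^bsub>RDirProd N M\<^esub> n \<in> I \<times> carrier M"
    using nI nM unfolding nr_ideal_def near_ring_def by auto
  have c3: "\<forall>n\<in>carrier (RDirProd N M). \<forall>n'\<in>carrier (RDirProd N M). \<forall>i\<in>I \<times> carrier M.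
        (n \<otimes>\<^bsub>RDirProd N M\<^esub> (n' \<oplus>\<^bsub>RDirProd N M\<^esub> i)) \<oplus>\<^bsub>RDirProd N M\<^esub> (inv\<^bsub>add_monoid (RDirProd N M)\<^esub> (n \<otimes>\<^bsub>RDirProd N M\<^esub> n')) \<in> I \<times> carrier M"
  proof (intro ballI)
    fix n n' i assume nn: "n \<in> carrier (RDirProd N M)" "n' \<in> carrier (RDirProd N M)" "i \<in> I \<times> carrier M"
    then obtain a b c d e f where H: "a \<in> carrier N" "b \<in> carrier M" "c \<in> carrier N" "d \<in> carrier M" "e \<in> I" "f \<in> carrier M"
      and eqs: "n = (a, b)" "n' = (c, d)" "i = (e, f)" by auto
    have ac: "a \<otimes>\<^bsub>N\<^esub> c \<in> carrier N" using H by (auto intro!: nmc[OF nN])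
    have bd: "b \<otimes>\<^bsub>M\<^esub> d \<in> carrier M" using H by (auto intro!: nmc[OF nM])
    have inv: "inv\<^bsub>add_monoid N \<times>\<times> add_monoid M\<^esub> (a \<otimes>\<^bsub>N\<^esub> c, b \<otimes>\<^bsub>M\<^esub> d)
          = (inv\<^bsub>add_monoid N\<^esub> (a \<otimes>\<^bsub>N\<^esub> c), inv\<^bsub>add_monoid M\<^esub> (b \<otimes>\<^bsub>M\<^esub> d))"
      using ac bd by (intro inv_DirProd[OF AN.is_group AM.is_group]) simp_all
    have df: "d \<oplus>\<^bsub>M\<^esub> f \<in> carrier M" using H AM.m_closed by simp
    have bdf: "b \<otimes>\<^bsub>M\<^esub> (d \<oplus>\<^bsub>M\<^esub> f) \<in> carrier M" using H df by (auto intro!: nmc[OF nM])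
    have ib: "inv\<^bsub>add_monoid M\<^esub> (b \<otimes>\<^bsub>M\<^esub> d) \<in> carrier M" using bd AM.inv_closed by simp
    have "(a \<otimes>\<^bsub>N\<^esub> (c \<oplus>\<^bsub>N\<^esub> e)) \<oplus>\<^bsub>N\<^esub> inv\<^bsub>add_monoid N\<^esub> (a \<otimes>\<^bsub>N\<^esub> c) \<in> I"
      using nI H unfolding nr_ideal_def by blast
    moreover have "(b \<otimes>\<^bsub>M\<^esub> (d \<oplus>\<^bsub>M\<^esub> f)) \<oplus>\<^bsub>M\<^esub> inv\<^bsub>add_monoid M\<^esub> (b \<otimes>\<^bsub>M\<^esub> d) \<in> carrier M"
    proof -
      have ib': "inv\<^bsub>add_monoid M\<^esub> (b \<otimes>\<^bsub>M\<^esub> d) \<in> carrier (add_monoid M)" using ib by simp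
      have bdf': "b \<otimes>\<^bsub>M\<^esub> (d \<oplus>\<^bsub>M\<^esub> f) \<in> carrier (add_monoid M)" using bdf by simp
      show ?thesis using AM.m_closed[OF bdf' ib'] by simp
    qed
    ultimately show "(n \<otimes>\<^bsub>RDirProd N M\<^esub> (n' \<oplus>\<^bsub>RDirProd N M\<^esub> i)) \<oplus>\<^bsub>RDirProd N M\<^esub> (inv\<^bsub>add_monoid (RDirProd N M)\<^esub> (n \<otimes>\<^bsub>RDirProd N M\<^esub> n')) \<in> I \<times> carrier M"
      unfolding eqs RDirProd_add_monoid RDP_mult RDP_add inv by simp
  qed
  have nIM: "nr_ideal (RDirProd N M) (I \<times> carrier M)"
    unfolding nr_ideal_def using c1 c2 c3 by blast
  let ?S = "\<Union>s\<in>carrier G. I \<inter> Ns s"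
  let ?T = "\<Union>s\<in>carrier G. Ms s"
  have nsN: "\<forall>s\<in>carrier G. Ns s \<lhd> add_monoid N" and nsM: "\<forall>s\<in>carrier G. Ms s \<lhd> add_monoid M"
    using gN gM unfolding graded_near_ring_def by blast+
  have gI: "generate (add_monoid N) ?S = I" using I unfolding graded_ideal_def by blast
  have gMc: "generate (add_monoid M) ?T = carrier M" using gM unfolding graded_near_ring_def by blast
  have Ssub: "?S \<subseteq> carrier (add_monoid N)" using Isub by auto
  have "\<And>s. s \<in> carrier G \<Longrightarrow> Ms s \<subseteq> carrier M" using nsM normal_sub by metis
  then have Tsub: "?T \<subseteq> carrier (add_monoid M)" by auto
  interpret P: group "add_monoid N \<times>\<times> add_monoid M" by (rule DirProd_group[OF AN.is_group AM.is_group])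
  let ?U = "\<Union>s\<in>carrier G. (I \<times> carrier M) \<inter> product_grading Ns Ms s"
  have z: "\<zero>\<^bsub>N\<^esub> \<in> I" using nI unfolding nr_ideal_def by (blast intro: normal_zero)
  have zN: "\<forall>s\<in>carrier G. \<zero>\<^bsub>N\<^esub> \<in> Ns s" using nsN by (blast intro: normal_zero)
  have zM: "\<forall>s\<in>carrier G. \<zero>\<^bsub>M\<^esub> \<in> Ms s" using nsM by (blast intro: normal_zero)
  have U: "?S \<times> {\<one>\<^bsub>add_monoid M\<^esub>} \<union> {\<one>\<^bsub>add_monoid N\<^esub>} \<times> ?T \<subseteq> ?U"
    using z zN zM Tsub by (auto simp: product_grading_def)
  then have "I \<times> carrier M \<subseteq> generate (add_monoid N \<times>\<times> add_monoid M) ?U"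
    using subset_trans[OF gen_prod[OF AN.is_group AM.is_group Ssub Tsub] P.mono_generate[OF U]] gI gMc by simp
  moreover have "generate (add_monoid N \<times>\<times> add_monoid M) ?U \<subseteq> I \<times> carrier M"
  proof (rule P.generate_subgroup_incl)
    show "?U \<subseteq> I \<times> carrier M" by blast
    show "subgroup (I \<times> carrier M) (add_monoid N \<times>\<times> add_monoid M)"
      using normal_imp_subgroup[OF c1] unfolding RDirProd_add_monoid .
  qed
  ultimately show ?thesis unfolding graded_ideal_def RDirProd_add_monoid using nIM by blast
qed



lemma proj_ideal:
  assumes nN: "near_ring N" and nM: "near_ring M"
    and K: "graded_ideal G (RDirProd N M) (product_grading Ns Ms) K"
  shows "graded_ideal G N Ns (fst ` K)" and "K \<subseteq> carrier N \<times> carrier M"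
proof -
  interpret AN: group "add_monoid N" by (rule near_ring_group[OF nN])
  interpret AM: group "add_monoid M" by (rule near_ring_group[OF nM])
  interpret P: group "add_monoid N \<times>\<times> add_monoid M" by (rule DirProd_group[OF AN.is_group AM.is_group])
  have nK: "nr_ideal (RDirProd N M) K" using K unfolding graded_ideal_def by blast
  have normK: "K \<lhd> add_monoid N \<times>\<times> add_monoid M"
    using nK unfolding nr_ideal_def RDirProd_add_monoid by blast
  have subK: "subgroup K (add_monoid N \<times>\<times> add_monoid M)" by (rule normal_imp_subgroup[OF normK])
  show Ksub: "K \<subseteq> carrier N \<times> carrier M" using subgroup.subset[OF subK] by simp
  interpret F: group_hom "add_monoid N \<times>\<times> add_monoid M" "add_monoid N" fst
    by (auto intro!: group_hom.intro group_hom_axioms.intro simp: hom_def mult_DirProd' P.is_group AN.is_group)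
  have subI: "subgroup (fst ` K) (add_monoid N)" using F.subgroup_img_is_subgroup[OF subK] .
  have z0: "\<zero>\<^bsub>M\<^esub> \<in> carrier M" using AM.one_closed by simp
  have zz: "\<zero>\<^bsub>M\<^esub> \<otimes>\<^bsub>M\<^esub> \<zero>\<^bsub>M\<^esub> = \<zero>\<^bsub>M\<^esub>" using near_zero_mult[OF nM z0] .
  have normI: "fst ` K \<lhd> add_monoid N"
  proof (rule AN.normal_invI[OF subI])
    fix x h assume x: "x \<in> carrier (add_monoid N)" and h: "h \<in> fst ` K"
    then obtain b where hb: "(h, b) \<in> K" by force
    have hc: "h \<in> carrier N" "b \<in> carrier M" using hb Ksub by auto
    have "(x, \<zero>\<^bsub>M\<^esub>) \<otimes>\<^bsub>add_monoid N \<times>\<times> add_monoid M\<^esub> (h, b) \<otimes>\<^bsub>add_monoid N \<times>\<times> add_monoid M\<^esub> inv\<^bsub>add_monoid N \<times>\<times> add_monoid M\<^esub> (x, \<zero>\<^bsub>M\<^esub>) \<in> K"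
      using normal.inv_op_closed2[OF normK, of "(x, \<zero>\<^bsub>M\<^esub>)" "(h,b)"] x hb z0 by simp
    then show "x \<otimes>\<^bsub>add_monoid N\<^esub> h \<otimes>\<^bsub>add_monoid N\<^esub> inv\<^bsub>add_monoid N\<^esub> x \<in> fst ` K"
      using inv_DirProd[OF AN.is_group AM.is_group, of x "\<zero>\<^bsub>M\<^esub>"] x z0
      by (simp add: image_iff) (metis fst_conv)
  qed
  have c2: "\<forall>i\<in>fst ` K. \<forall>n\<in>carrier N. i \<otimes>\<^bsub>N\<^esub> n \<in> fst ` K"
  proof (intro ballI)
    fix i n assume i: "i \<in> fst ` K" and n: "n \<in> carrier N"
    then obtain b where hb: "(i, b) \<in> K" by force
    have "(i, b) \<otimes>\<^bsub>RDirProd N M\<^esub> (n, \<zero>\<^bsub>M\<^esub>) \<in> K"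
      using nK hb n z0 unfolding nr_ideal_def RDirProd_carrier by blast
    then show "i \<otimes>\<^bsub>N\<^esub> n \<in> fst ` K" by (simp add: image_iff) (metis fst_conv)
  qed
  have c3: "\<forall>n\<in>carrier N. \<forall>n'\<in>carrier N. \<forall>i\<in>fst ` K.
        (n \<otimes>\<^bsub>N\<^esub> (n' \<oplus>\<^bsub>N\<^esub> i)) \<oplus>\<^bsub>N\<^esub> (inv\<^bsub>add_monoid N\<^esub> (n \<otimes>\<^bsub>N\<^esub> n')) \<in> fst ` K"
  proof (intro ballI)
    fix n n' i assume n: "n \<in> carrier N" and n': "n' \<in> carrier N" and i: "i \<in> fst ` K"
    then obtain b where hb: "(i, b) \<in> K" by force
    have nn: "n \<otimes>\<^bsub>N\<^esub> n' \<in> carrier N" using n n' by (auto intro!: nmc[OF nN])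
    have c3K: "\<forall>n\<in>carrier (RDirProd N M). \<forall>n'\<in>carrier (RDirProd N M). \<forall>i\<in>K.
        (n \<otimes>\<^bsub>RDirProd N M\<^esub> (n' \<oplus>\<^bsub>RDirProd N M\<^esub> i)) \<oplus>\<^bsub>RDirProd N M\<^esub> (inv\<^bsub>add_monoid (RDirProd N M)\<^esub> (n \<otimes>\<^bsub>RDirProd N M\<^esub> n')) \<in> K"
      using nK unfolding nr_ideal_def by blast
    have m1: "(n, \<zero>\<^bsub>M\<^esub>) \<in> carrier (RDirProd N M)" and m2: "(n', \<zero>\<^bsub>M\<^esub>) \<in> carrier (RDirProd N M)"
      using n n' z0 by simp_all
    have big: "((n, \<zero>\<^bsub>M\<^esub>) \<otimes>\<^bsub>RDirProd N M\<^esub> ((n', \<zero>\<^bsub>M\<^esub>) \<oplus>\<^bsub>RDirProd N M\<^esub> (i, b))) \<oplus>\<^bsub>RDirProd N M\<^esub> (inv\<^bsub>add_monoid (RDirProd N M)\<^esub> ((n, \<zero>\<^bsub>M\<^esub>) \<otimes>\<^bsub>RDirProd N M\<^esub> (n', \<zero>\<^bsub>M\<^esub>))) \<in> K"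
      using c3K m1 m2 hb by blast
    have iv: "inv\<^bsub>add_monoid N \<times>\<times> add_monoid M\<^esub> (n \<otimes>\<^bsub>N\<^esub> n', \<zero>\<^bsub>M\<^esub>) = (inv\<^bsub>add_monoid N\<^esub> (n \<otimes>\<^bsub>N\<^esub> n'), inv\<^bsub>add_monoid M\<^esub> \<zero>\<^bsub>M\<^esub>)"
      using nn z0 by (intro inv_DirProd[OF AN.is_group AM.is_group]) simp_all
    have eq: "fst (((n, \<zero>\<^bsub>M\<^esub>) \<otimes>\<^bsub>RDirProd N M\<^esub> ((n', \<zero>\<^bsub>M\<^esub>) \<oplus>\<^bsub>RDirProd N M\<^esub> (i, b))) \<oplus>\<^bsub>RDirProd N M\<^esub> (inv\<^bsub>add_monoid (RDirProd N M)\<^esub> ((n, \<zero>\<^bsub>M\<^esub>) \<otimes>\<^bsub>RDirProd N M\<^esub> (n', \<zero>\<^bsub>M\<^esub>))))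
       = (n \<otimes>\<^bsub>N\<^esub> (n' \<oplus>\<^bsub>N\<^esub> i)) \<oplus>\<^bsub>N\<^esub> (inv\<^bsub>add_monoid N\<^esub> (n \<otimes>\<^bsub>N\<^esub> n'))"
      using zz iv by (simp only: RDP_mult RDP_add RDirProd_add_monoid) simp
    show "(n \<otimes>\<^bsub>N\<^esub> (n' \<oplus>\<^bsub>N\<^esub> i)) \<oplus>\<^bsub>N\<^esub> (inv\<^bsub>add_monoid N\<^esub> (n \<otimes>\<^bsub>N\<^esub> n')) \<in> fst ` K"
      unfolding eq[symmetric] by (rule imageI[OF big])
  qed
  have nI: "nr_ideal N (fst ` K)" unfolding nr_ideal_def using normI c2 c3 by blast
  let ?U = "\<Union>s\<in>carrier G. K \<inter> product_grading Ns Ms s"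
  have gK: "generate (add_monoid N \<times>\<times> add_monoid M) ?U = K"
    using K unfolding graded_ideal_def RDirProd_add_monoid by blast
  have Usub: "?U \<subseteq> carrier (add_monoid N) \<times> carrier (add_monoid M)" using Ksub by auto
  have e: "fst ` K = generate (add_monoid N) (fst ` ?U)"
    using gen_fst[OF AN.is_group AM.is_group Usub] gK by simp
  have "fst ` ?U \<subseteq> (\<Union>s\<in>carrier G. fst ` K \<inter> Ns s)"
    by (force simp: product_grading_def)
  then have 1: "fst ` K \<subseteq> generate (add_monoid N) (\<Union>s\<in>carrier G. fst ` K \<inter> Ns s)"
    unfolding e by (rule AN.mono_generate)
  have 2: "generate (add_monoid N) (\<Union>s\<in>carrier G. fst ` K \<inter> Ns s) \<subseteq> fst ` K"
    by (rule AN.generate_subgroup_incl[OF _ subI]) blast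
  show "graded_ideal G N Ns (fst ` K)"
    unfolding graded_ideal_def using nI 1 2 by blast
qed



lemma RDP_mult': "x \<otimes>\<^bsub>RDirProd N M\<^esub> y = (fst x \<otimes>\<^bsub>N\<^esub> fst y, snd x \<otimes>\<^bsub>M\<^esub> snd y)"
  by (cases x, cases y) simp

lemma prods_sub:
  assumes "near_ring N" "I \<subseteq> carrier N" "J \<subseteq> carrier N"
  shows "{i \<otimes>\<^bsub>N\<^esub> j | i j. i \<in> I \<and> j \<in> J} \<subseteq> carrier N"
  using assms(2,3) by (auto intro!: nmc[OF assms(1)])

lemma ideal_prod_sub:
  assumes "near_ring N" "I \<subseteq> carrier N" "J \<subseteq> carrier N"
  shows "ideal_prod N I J \<subseteq> carrier N"
proof -
  interpret AN: group "add_monoid N" by (rule near_ring_group[OF assms(1)])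
  show ?thesis unfolding ideal_prod_def using AN.generate_incl[of "{i \<otimes>\<^bsub>N\<^esub> j | i j. i \<in> I \<and> j \<in> J}"]
      prods_sub[OF assms] by simp
qed

lemma ideal_prod_subgroup:
  assumes "near_ring N" "I \<subseteq> carrier N" "J \<subseteq> carrier N"
  shows "subgroup (ideal_prod N I J) (add_monoid N)"
proof -
  interpret AN: group "add_monoid N" by (rule near_ring_group[OF assms(1)])
  show ?thesis unfolding ideal_prod_def using AN.generate_is_subgroup[of "{i \<otimes>\<^bsub>N\<^esub> j | i j. i \<in> I \<and> j \<in> J}"]
      prods_sub[OF assms] by simp
qed

lemma lemC:
  assumes nN: "near_ring N" and nM: "near_ring M"
    and K: "K \<subseteq> carrier N \<times> carrier M" and L: "L \<subseteq> carrier N \<times> carrier M"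
  shows "fst ` ideal_prod (RDirProd N M) K L = ideal_prod N (fst ` K) (fst ` L)"
proof -
  interpret AN: group "add_monoid N" by (rule near_ring_group[OF nN])
  interpret AM: group "add_monoid M" by (rule near_ring_group[OF nM])
  let ?S = "{k \<otimes>\<^bsub>RDirProd N M\<^esub> l | k l. k \<in> K \<and> l \<in> L}"
  have Ssub: "?S \<subseteq> carrier (add_monoid N) \<times> carrier (add_monoid M)"
    using K L by (auto simp: RDP_mult' intro!: nmc[OF nN] nmc[OF nM])
  have "fst ` ?S = {i \<otimes>\<^bsub>N\<^esub> j | i j. i \<in> fst ` K \<and> j \<in> fst ` L}"
    unfolding RDP_mult' by force
  then show ?thesis unfolding ideal_prod_def RDirProd_add_monoid
    using gen_fst[OF AN.is_group AM.is_group Ssub] by simp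
qed

lemma lemD1:
  assumes nN: "near_ring N" and nM: "near_ring M"
    and P: "P \<subseteq> carrier N" and z: "\<zero>\<^bsub>N\<^esub> \<in> P"
  shows "ideal_prod N P P \<times> ideal_prod M (carrier M) (carrier M) \<subseteq> ideal_prod (RDirProd N M) (P \<times> carrier M) (P \<times> carrier M)"
proof -
  interpret AN: group "add_monoid N" by (rule near_ring_group[OF nN])
  interpret AM: group "add_monoid M" by (rule near_ring_group[OF nM])
  interpret Pr: group "add_monoid N \<times>\<times> add_monoid M" by (rule DirProd_group[OF AN.is_group AM.is_group])
  let ?S = "{i \<otimes>\<^bsub>N\<^esub> j | i j. i \<in> P \<and> j \<in> P}"
  let ?T = "{i \<otimes>\<^bsub>M\<^esub> j | i j. i \<in> carrier M \<and> j \<in> carrier M}"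
  have S: "?S \<subseteq> carrier (add_monoid N)" using prods_sub[OF nN P P] by simp
  have T: "?T \<subseteq> carrier (add_monoid M)" using prods_sub[OF nM, of "carrier M" "carrier M"] by simp
  have z0: "\<zero>\<^bsub>M\<^esub> \<in> carrier M" using AM.one_closed by simp
  have zzM: "\<zero>\<^bsub>M\<^esub> \<otimes>\<^bsub>M\<^esub> \<zero>\<^bsub>M\<^esub> = \<zero>\<^bsub>M\<^esub>" using near_zero_mult[OF nM z0] .
  have zzN: "\<zero>\<^bsub>N\<^esub> \<otimes>\<^bsub>N\<^esub> \<zero>\<^bsub>N\<^esub> = \<zero>\<^bsub>N\<^esub>" using near_zero_mult[OF nN] z P by (simp add: subset_iff)
  have "?S \<times> {\<one>\<^bsub>add_monoid M\<^esub>} \<union> {\<one>\<^bsub>add_monoid N\<^esub>} \<times> ?T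
      \<subseteq> {k \<otimes>\<^bsub>RDirProd N M\<^esub> l | k l. k \<in> P \<times> carrier M \<and> l \<in> P \<times> carrier M}"
  proof
    fix x assume "x \<in> ?S \<times> {\<one>\<^bsub>add_monoid M\<^esub>} \<union> {\<one>\<^bsub>add_monoid N\<^esub>} \<times> ?T"
    then consider i j where "i \<in> P" "j \<in> P" "x = (i \<otimes>\<^bsub>N\<^esub> j, \<zero>\<^bsub>M\<^esub>)"
      | i j where "i \<in> carrier M" "j \<in> carrier M" "x = (\<zero>\<^bsub>N\<^esub>, i \<otimes>\<^bsub>M\<^esub> j)" by auto
    then show "x \<in> {k \<otimes>\<^bsub>RDirProd N M\<^esub> l | k l. k \<in> P \<times> carrier M \<and> l \<in> P \<times> carrier M}"
    proof cases
      case 1 then show ?thesis using zzM z0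
        by (intro CollectI exI[of _ "(i, \<zero>\<^bsub>M\<^esub>)"] exI[of _ "(j, \<zero>\<^bsub>M\<^esub>)"]) simp
    next
      case 2 then show ?thesis using zzN z
        by (intro CollectI exI[of _ "(\<zero>\<^bsub>N\<^esub>, i)"] exI[of _ "(\<zero>\<^bsub>N\<^esub>, j)"]) simp
    qed
  qed
  then show ?thesis unfolding ideal_prod_def RDirProd_add_monoid
    by (rule subset_trans[OF gen_prod[OF AN.is_group AM.is_group S T] Pr.mono_generate])
qed

lemma lemD2:
  assumes nN: "near_ring N" and nM: "near_ring M"
    and K: "K \<subseteq> carrier N \<times> carrier M" and L: "L \<subseteq> carrier N \<times> carrier M"
  shows "ideal_prod (RDirProd N M) K L \<subseteq> carrier N \<times> ideal_prod M (carrier M) (carrier M)"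
proof -
  interpret AN: group "add_monoid N" by (rule near_ring_group[OF nN])
  interpret AM: group "add_monoid M" by (rule near_ring_group[OF nM])
  interpret Pr: group "add_monoid N \<times>\<times> add_monoid M" by (rule DirProd_group[OF AN.is_group AM.is_group])
  have sg: "subgroup (carrier N \<times> ideal_prod M (carrier M) (carrier M)) (add_monoid N \<times>\<times> add_monoid M)"
    using DirProd_subgroups[OF AN.is_group _ AM.is_group ideal_prod_subgroup[OF nM]] AN.subgroup_self by simp
  have "{k \<otimes>\<^bsub>RDirProd N M\<^esub> l | k l. k \<in> K \<and> l \<in> L} \<subseteq> carrier N \<times> ideal_prod M (carrier M) (carrier M)"
  proof
    fix x assume "x \<in> {k \<otimes>\<^bsub>RDirProd N M\<^esub> l | k l. k \<in> K \<and> l \<in> L}"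
    then obtain k l where kl: "k \<in> K" "l \<in> L" "x = k \<otimes>\<^bsub>RDirProd N M\<^esub> l" by blast
    have "snd k \<otimes>\<^bsub>M\<^esub> snd l \<in> ideal_prod M (carrier M) (carrier M)"
    proof -
      have "snd k \<in> carrier M" "snd l \<in> carrier M" using kl K L by auto
      then show ?thesis unfolding ideal_prod_def
        by (intro generate.incl CollectI exI[of _ "snd k"] exI[of _ "snd l"]) simp
    qed
    moreover have "fst k \<otimes>\<^bsub>N\<^esub> fst l \<in> carrier N" using kl K L by (auto intro!: nmc[OF nN])
    ultimately show "x \<in> carrier N \<times> ideal_prod M (carrier M) (carrier M)"
      using kl unfolding RDP_mult' by simp
  qed
  then show ?thesis unfolding ideal_prod_def[of "RDirProd N M"] RDirProd_add_monoid
    by (rule Pr.generate_subgroup_incl[OF _ sg])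
qed

lemma lemE:
  assumes nN: "near_ring N" and nM: "near_ring M" and P: "P \<subseteq> carrier N"
  shows "ideal_prod (RDirProd N M) (P \<times> carrier M) (P \<times> carrier M) \<subseteq> ideal_prod N P P \<times> carrier M"
proof -
  interpret AN: group "add_monoid N" by (rule near_ring_group[OF nN])
  interpret AM: group "add_monoid M" by (rule near_ring_group[OF nM])
  interpret Pr: group "add_monoid N \<times>\<times> add_monoid M" by (rule DirProd_group[OF AN.is_group AM.is_group])
  have sg: "subgroup (ideal_prod N P P \<times> carrier M) (add_monoid N \<times>\<times> add_monoid M)"
    using DirProd_subgroups[OF AN.is_group ideal_prod_subgroup[OF nN P P] AM.is_group] AM.subgroup_self by simp
  have "{k \<otimes>\<^bsub>RDirProd N M\<^esub> l | k l. k \<in> P \<times> carrier M \<and> l \<in> P \<times> carrier M} \<subseteq> ideal_prod N P P \<times> carrier M"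
  proof
    fix x assume "x \<in> {k \<otimes>\<^bsub>RDirProd N M\<^esub> l | k l. k \<in> P \<times> carrier M \<and> l \<in> P \<times> carrier M}"
    then obtain k l where kl: "k \<in> P \<times> carrier M" "l \<in> P \<times> carrier M" "x = k \<otimes>\<^bsub>RDirProd N M\<^esub> l" by blast
    have "fst k \<otimes>\<^bsub>N\<^esub> fst l \<in> ideal_prod N P P"
    proof -
      have "fst k \<in> P" "fst l \<in> P" using kl by (auto simp: mem_Times_iff)
      then show ?thesis unfolding ideal_prod_def
        by (intro generate.incl CollectI exI[of _ "fst k"] exI[of _ "fst l"]) simp
    qed
    moreover have "snd k \<otimes>\<^bsub>M\<^esub> snd l \<in> carrier M" using kl by (auto intro!: nmc[OF nM])
    ultimately show "x \<in> ideal_prod N P P \<times> carrier M"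
      using kl unfolding RDP_mult' by simp
  qed
  then show ?thesis unfolding ideal_prod_def[of "RDirProd N M"] RDirProd_add_monoid
    by (rule Pr.generate_subgroup_incl[OF _ sg])
qed

lemma lemF:
  assumes nN: "near_ring N" and nM: "near_ring M" and I: "I \<subseteq> carrier N" and J: "J \<subseteq> carrier N"
  shows "ideal_prod N I J \<times> {\<zero>\<^bsub>M\<^esub>} \<subseteq> ideal_prod (RDirProd N M) (I \<times> carrier M) (J \<times> carrier M)"
proof -
  interpret AN: group "add_monoid N" by (rule near_ring_group[OF nN])
  interpret AM: group "add_monoid M" by (rule near_ring_group[OF nM])
  interpret Pr: group "add_monoid N \<times>\<times> add_monoid M" by (rule DirProd_group[OF AN.is_group AM.is_group])
  let ?S = "{i \<otimes>\<^bsub>N\<^esub> j | i j. i \<in> I \<and> j \<in> J}"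
  have S: "?S \<subseteq> carrier (add_monoid N)" using prods_sub[OF nN I J] by simp
  have z0: "\<zero>\<^bsub>M\<^esub> \<in> carrier M" using AM.one_closed by simp
  have zzM: "\<zero>\<^bsub>M\<^esub> \<otimes>\<^bsub>M\<^esub> \<zero>\<^bsub>M\<^esub> = \<zero>\<^bsub>M\<^esub>" using near_zero_mult[OF nM z0] .
  have "?S \<times> {\<one>\<^bsub>add_monoid M\<^esub>} \<subseteq> {k \<otimes>\<^bsub>RDirProd N M\<^esub> l | k l. k \<in> I \<times> carrier M \<and> l \<in> J \<times> carrier M}"
  proof
    fix x assume "x \<in> ?S \<times> {\<one>\<^bsub>add_monoid M\<^esub>}"
    then obtain i j where "i \<in> I" "j \<in> J" "x = (i \<otimes>\<^bsub>N\<^esub> j, \<zero>\<^bsub>M\<^esub>)" by auto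
    then show "x \<in> {k \<otimes>\<^bsub>RDirProd N M\<^esub> l | k l. k \<in> I \<times> carrier M \<and> l \<in> J \<times> carrier M}"
      using zzM z0 by (intro CollectI exI[of _ "(i, \<zero>\<^bsub>M\<^esub>)"] exI[of _ "(j, \<zero>\<^bsub>M\<^esub>)"]) simp
  qed
  then have "generate (add_monoid N) ?S \<times> {\<one>\<^bsub>add_monoid M\<^esub>} \<subseteq>
     generate (add_monoid N \<times>\<times> add_monoid M) {k \<otimes>\<^bsub>RDirProd N M\<^esub> l | k l. k \<in> I \<times> carrier M \<and> l \<in> J \<times> carrier M}"
    unfolding gen_left[OF AN.is_group AM.is_group S] by (rule Pr.mono_generate)
  then show ?thesis unfolding ideal_prod_def RDirProd_add_monoid by simp
qed

lemma lemG:
  assumes nN: "near_ring N" and nM: "near_ring M" and I: "I \<subseteq> carrier N" and J: "J \<subseteq> carrier N"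
    and P: "subgroup P (add_monoid N)" and IJ: "ideal_prod N I J \<subseteq> P"
  shows "ideal_prod (RDirProd N M) (I \<times> carrier M) (J \<times> carrier M) \<subseteq> P \<times> carrier M"
proof -
  interpret AN: group "add_monoid N" by (rule near_ring_group[OF nN])
  interpret AM: group "add_monoid M" by (rule near_ring_group[OF nM])
  interpret Pr: group "add_monoid N \<times>\<times> add_monoid M" by (rule DirProd_group[OF AN.is_group AM.is_group])
  have sg: "subgroup (P \<times> carrier M) (add_monoid N \<times>\<times> add_monoid M)"
    using DirProd_subgroups[OF AN.is_group P AM.is_group] AM.subgroup_self by simp
  have "{k \<otimes>\<^bsub>RDirProd N M\<^esub> l | k l. k \<in> I \<times> carrier M \<and> l \<in> J \<times> carrier M} \<subseteq> P \<times> carrier M"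
  proof
    fix x assume "x \<in> {k \<otimes>\<^bsub>RDirProd N M\<^esub> l | k l. k \<in> I \<times> carrier M \<and> l \<in> J \<times> carrier M}"
    then obtain k l where kl: "k \<in> I \<times> carrier M" "l \<in> J \<times> carrier M" "x = k \<otimes>\<^bsub>RDirProd N M\<^esub> l" by blast
    have "fst k \<otimes>\<^bsub>N\<^esub> fst l \<in> ideal_prod N I J"
    proof -
      have "fst k \<in> I" "fst l \<in> J" using kl by (auto simp: mem_Times_iff)
      then show ?thesis unfolding ideal_prod_def
        by (intro generate.incl CollectI exI[of _ "fst k"] exI[of _ "fst l"]) simp
    qed
    moreover have "snd k \<otimes>\<^bsub>M\<^esub> snd l \<in> carrier M" using kl by (auto intro!: nmc[OF nM])
    ultimately show "x \<in> P \<times> carrier M"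
      using kl IJ unfolding RDP_mult' by auto
  qed
  then show ?thesis unfolding ideal_prod_def[of "RDirProd N M"] RDirProd_add_monoid
    by (rule Pr.generate_subgroup_incl[OF _ sg])
qed


theorem theorem17:
  fixes G :: "('g, 'n) monoid_scheme"
    and N :: "('a, 'm) ring_scheme" and Ns :: "'g \<Rightarrow> 'a set"
    and M :: "('b, 'k) ring_scheme" and Ms :: "'g \<Rightarrow> 'b set"
    and P :: "'a set"
  assumes "monoid G"
    and "graded_near_ring G N Ns"
    and "graded_near_ring G M Ms"
    and "graded_ideal G N Ns P"
  shows "graded_almost_prime G N Ns P \<longleftrightarrow>
         graded_almost_prime G (RDirProd N M) (product_grading Ns Ms) (P \<times> carrier M)"
proof -
  have nN: "near_ring N" using assms(2) by (rule graded_nr)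
  have nM: "near_ring M" using assms(3) by (rule graded_nr)
  interpret AN: group "add_monoid N" by (rule near_ring_group[OF nN])
  interpret AM: group "add_monoid M" by (rule near_ring_group[OF nM])
  have nP: "nr_ideal N P" using assms(4) unfolding graded_ideal_def by blast
  have Psub: "P \<subseteq> carrier N" by (rule nr_ideal_sub[OF nP])
  have Psg: "subgroup P (add_monoid N)" by (rule nr_ideal_subgroup[OF nP])
  have z: "\<zero>\<^bsub>N\<^esub> \<in> P" using subgroup.one_closed[OF Psg] by simp
  have z0: "\<zero>\<^bsub>M\<^esub> \<in> carrier M" using AM.one_closed by simp
  have PM: "graded_ideal G (RDirProd N M) (product_grading Ns Ms) (P \<times> carrier M)"
    by (rule prod_ideal[OF assms(2,3,4)])
  show ?thesis
  proof
    assume gap: "graded_almost_prime G N Ns P"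
    show "graded_almost_prime G (RDirProd N M) (product_grading Ns Ms) (P \<times> carrier M)"
      unfolding graded_almost_prime_def
    proof (intro conjI allI impI)
      show "graded_ideal G (RDirProd N M) (product_grading Ns Ms) (P \<times> carrier M)" by (rule PM)
      fix K L
      assume K: "graded_ideal G (RDirProd N M) (product_grading Ns Ms) K"
        and L: "graded_ideal G (RDirProd N M) (product_grading Ns Ms) L"
        and h1: "ideal_prod (RDirProd N M) K L \<subseteq> P \<times> carrier M"
        and h2: "\<not> ideal_prod (RDirProd N M) K L \<subseteq> ideal_prod (RDirProd N M) (P \<times> carrier M) (P \<times> carrier M) \<inter> carrier (RDirProd N M)"
      have IK: "graded_ideal G N Ns (fst ` K)" and Ksub: "K \<subseteq> carrier N \<times> carrier M"
        using proj_ideal[OF nN nM K] by blast+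
      have IL: "graded_ideal G N Ns (fst ` L)" and Lsub: "L \<subseteq> carrier N \<times> carrier M"
        using proj_ideal[OF nN nM L] by blast+
      have e: "fst ` ideal_prod (RDirProd N M) K L = ideal_prod N (fst ` K) (fst ` L)"
        by (rule lemC[OF nN nM Ksub Lsub])
      have s1: "ideal_prod N (fst ` K) (fst ` L) \<subseteq> P"
        unfolding e[symmetric] using h1 by force
      obtain x where x1: "x \<in> ideal_prod (RDirProd N M) K L"
        and x2: "x \<notin> ideal_prod (RDirProd N M) (P \<times> carrier M) (P \<times> carrier M) \<inter> carrier (RDirProd N M)"
        using h2 by blast
      have xc: "x \<in> carrier N \<times> ideal_prod M (carrier M) (carrier M)"
        using lemD2[OF nN nM Ksub Lsub] x1 by blast
      have M2: "ideal_prod M (carrier M) (carrier M) \<subseteq> carrier M"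
        by (rule ideal_prod_sub[OF nM]) simp_all
      have xcar: "x \<in> carrier (RDirProd N M)" using xc M2 by auto
      have nx: "fst x \<notin> ideal_prod N P P"
      proof
        assume "fst x \<in> ideal_prod N P P"
        then have "x \<in> ideal_prod N P P \<times> ideal_prod M (carrier M) (carrier M)"
          using xc by (cases x) auto
        then have "x \<in> ideal_prod (RDirProd N M) (P \<times> carrier M) (P \<times> carrier M)"
          using lemD1[OF nN nM Psub z] by blast
        then show False using x2 xcar by blast
      qed
      have "fst x \<in> ideal_prod N (fst ` K) (fst ` L)" using x1 e by blast
      then have "\<not> ideal_prod N (fst ` K) (fst ` L) \<subseteq> ideal_prod N P P \<inter> carrier N"
        using nx by blast
      moreover have gapI: "\<forall>I J. graded_ideal G N Ns I \<longrightarrow> graded_ideal G N Ns J \<longrightarrow>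
        ideal_prod N I J \<subseteq> P \<longrightarrow>
        \<not> ideal_prod N I J \<subseteq> ideal_prod N P P \<inter> carrier N \<longrightarrow>
        I \<subseteq> P \<or> J \<subseteq> P"
        using gap unfolding graded_almost_prime_def by (rule conjunct2)
      ultimately have "fst ` K \<subseteq> P \<or> fst ` L \<subseteq> P"
        using gapI[rule_format, OF IK IL s1] by blast
      moreover have kk: "K \<subseteq> fst ` K \<times> carrier M" using Ksub by force
      moreover have ll: "L \<subseteq> fst ` L \<times> carrier M" using Lsub by force
      ultimately show "K \<subseteq> P \<times> carrier M \<or> L \<subseteq> P \<times> carrier M"
        by (meson Sigma_mono order_refl subset_trans)
    qed
  next
    assume gap2: "graded_almost_prime G (RDirProd N M) (product_grading Ns Ms) (P \<times> carrier M)"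
    show "graded_almost_prime G N Ns P"
      unfolding graded_almost_prime_def
    proof (intro conjI allI impI)
      show "graded_ideal G N Ns P" by (rule assms(4))
      fix I J
      assume I: "graded_ideal G N Ns I" and J: "graded_ideal G N Ns J"
        and h1: "ideal_prod N I J \<subseteq> P"
        and h2: "\<not> ideal_prod N I J \<subseteq> ideal_prod N P P \<inter> carrier N"
      have Isub: "I \<subseteq> carrier N" using I nr_ideal_sub unfolding graded_ideal_def by blast
      have Jsub: "J \<subseteq> carrier N" using J nr_ideal_sub unfolding graded_ideal_def by blast
      have K: "graded_ideal G (RDirProd N M) (product_grading Ns Ms) (I \<times> carrier M)"
        by (rule prod_ideal[OF assms(2,3) I])
      have L: "graded_ideal G (RDirProd N M) (product_grading Ns Ms) (J \<times> carrier M)"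
        by (rule prod_ideal[OF assms(2,3) J])
      have s1: "ideal_prod (RDirProd N M) (I \<times> carrier M) (J \<times> carrier M) \<subseteq> P \<times> carrier M"
        by (rule lemG[OF nN nM Isub Jsub Psg h1])
      obtain y where y1: "y \<in> ideal_prod N I J" and y2: "y \<notin> ideal_prod N P P \<inter> carrier N"
        using h2 by blast
      have yc: "y \<in> carrier N" using ideal_prod_sub[OF nN Isub Jsub] y1 by blast
      have "(y, \<zero>\<^bsub>M\<^esub>) \<in> ideal_prod (RDirProd N M) (I \<times> carrier M) (J \<times> carrier M)"
        using lemF[OF nN nM Isub Jsub] y1 by blast
      moreover have "(y, \<zero>\<^bsub>M\<^esub>) \<notin> ideal_prod (RDirProd N M) (P \<times> carrier M) (P \<times> carrier M)"
        using lemE[OF nN nM Psub] y2 yc by blast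
      ultimately have "\<not> ideal_prod (RDirProd N M) (I \<times> carrier M) (J \<times> carrier M)
          \<subseteq> ideal_prod (RDirProd N M) (P \<times> carrier M) (P \<times> carrier M) \<inter> carrier (RDirProd N M)"
        by blast
      moreover have gapI: "\<forall>I J. graded_ideal G (RDirProd N M) (product_grading Ns Ms) I \<longrightarrow> graded_ideal G (RDirProd N M) (product_grading Ns Ms) J \<longrightarrow>
        ideal_prod (RDirProd N M) I J \<subseteq> P \<times> carrier M \<longrightarrow>
        \<not> ideal_prod (RDirProd N M) I J \<subseteq> ideal_prod (RDirProd N M) (P \<times> carrier M) (P \<times> carrier M) \<inter> carrier (RDirProd N M) \<longrightarrow>
        I \<subseteq> P \<times> carrier M \<or> J \<subseteq> P \<times> carrier M"
        using gap2 unfolding graded_almost_prime_def by (rule conjunct2)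
      ultimately have "I \<times> carrier M \<subseteq> P \<times> carrier M \<or> J \<times> carrier M \<subseteq> P \<times> carrier M"
        using gapI[rule_format, OF K L s1] by blast
      then show "I \<subseteq> P \<or> J \<subseteq> P"
      proof (elim disjE)
        assume "I \<times> carrier M \<subseteq> P \<times> carrier M"
        then have "I \<subseteq> P" using z0 by (auto simp: subset_iff)
        then show ?thesis ..
      next
        assume "J \<times> carrier M \<subseteq> P \<times> carrier M"
        then have "J \<subseteq> P" using z0 by (auto simp: subset_iff)
        then show ?thesis ..
      qed
    qed
  qed
qed


end
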